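(* Let $k$ be a positive integer and let $a/b$ be a vertex of $\mathcal F_k$ with $|a|+|b|>k$. Then every neighbor $x/y$ of $a/b$ in $\mathcal F_k$ is comparable to $a/b$, i.e. $a/b\prec x/y$ or $x/y\prec a/b$.
   Context: The vertex set $V$ consists of all reduced fractions $p/q$ with $p,q\in\mathbb Z$, $\gcd(p,q)=1$, together with $1/0$; here $p/q$ and $(-p)/(-q)$ denote the same vertex. For vertices define $d(p/q,a/b)=|pb-qa|$. The graph $\mathcal F_k$ has vertex set $V$, with an edge between $p/q$ and $a/b$ exactly when $d(p/q,a/b)=k$. Write $a/b\prec p/q$ when $a/b$ and $p/q$ are adjacent in $\mathcal F_k$ and $|a|\le|p|$ and $|b|\le|q|$. *)

theory Defs
  imports Main
begin

text \<open>A vertex p/q is represented by an integer pair (p,q) with gcd p q = 1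
  (this includes 1/0 as (1,0) or (-1,0)). The pairs (p,q) and (-p,-q) denote the
  same vertex; all notions below are invariant under this sign change.\<close>

definition vertex :: "int \<times> int \<Rightarrow> bool" where
  "vertex v \<longleftrightarrow> gcd (fst v) (snd v) = 1"

definition fdist :: "int \<times> int \<Rightarrow> int \<times> int \<Rightarrow> int" where
  "fdist v w = \<bar>fst v * snd w - snd v * fst w\<bar>"

definition adjF :: "int \<Rightarrow> int \<times> int \<Rightarrow> int \<times> int \<Rightarrow> bool" where
  "adjF k v w \<longleftrightarrow> vertex v \<and> vertex w \<and> fdist v w = k"

definition precF :: "int \<Rightarrow> int \<times> int \<Rightarrow> int \<times> int \<Rightarrow> bool" where
  "precF k w v \<longleftrightarrow> adjF k w v \<and> \<bar>fst w\<bar> \<le> \<bar>fst v\<bar> \<and> \<bar>snd w\<bar> \<le> \<bar>snd v\<bar>"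

end

theory Submission
  imports Defs
begin

lemma key:
  fixes a b x y :: int
  assumes "\<bar>x\<bar> \<ge> \<bar>a\<bar> + 1" "\<bar>y\<bar> \<le> \<bar>b\<bar> - 1"
  shows "\<bar>a * y - b * x\<bar> \<ge> \<bar>a\<bar> + \<bar>b\<bar>"
proof -
  have 1: "\<bar>b\<bar> * \<bar>x\<bar> \<ge> \<bar>b\<bar> * (\<bar>a\<bar> + 1)" using assms by (simp add: mult_left_mono)
  have 2: "\<bar>a\<bar> * \<bar>y\<bar> \<le> \<bar>a\<bar> * (\<bar>b\<bar> - 1)" using assms by (simp add: mult_left_mono)
  have 3: "\<bar>a * y - b * x\<bar> \<ge> \<bar>b\<bar> * \<bar>x\<bar> - \<bar>a\<bar> * \<bar>y\<bar>"
    by (metis abs_minus_commute abs_mult abs_triangle_ineq2)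
  show ?thesis using 1 2 3 by (simp add: algebra_simps)
qed

theorem lemma4p5:
  fixes k a b x y :: int
  assumes "k > 0"
    and "vertex (a, b)"
    and "\<bar>a\<bar> + \<bar>b\<bar> > k"
    and "adjF k (a, b) (x, y)"
  shows "precF k (a, b) (x, y) \<or> precF k (x, y) (a, b)"
proof -
  have d: "\<bar>a * y - b * x\<bar> = k" using assms(4) by (simp add: adjF_def fdist_def)
  have d2: "\<bar>x * b - y * a\<bar> = k" using d by (simp add: abs_minus_commute algebra_simps)
  have a2: "adjF k (x, y) (a, b)" using assms(4) d2 by (simp add: adjF_def fdist_def)
  have n1: "\<not> (\<bar>x\<bar> \<ge> \<bar>a\<bar> + 1 \<and> \<bar>y\<bar> \<le> \<bar>b\<bar> - 1)"
    using key[of a x y b] d assms(3) by auto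
  have n2: "\<not> (\<bar>y\<bar> \<ge> \<bar>b\<bar> + 1 \<and> \<bar>x\<bar> \<le> \<bar>a\<bar> - 1)"
    using key[of b y x a] d assms(3) by (auto simp: algebra_simps abs_minus_commute)
  show ?thesis using n1 n2 assms(4) a2 unfolding precF_def fst_conv snd_conv by auto
qed

end
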